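(* Let $\epsilon>0$. Assume there exists a quantum algorithm $\mathcal{A}$ that takes a classical witness $w\in\{0,1\}^q$, makes $k$ queries to the graph oracle, and satisfies: for every $S\subseteq V$ with $|S|=\zeta$ there exists $w_S\in\{0,1\}^q$ with $\mathbb{E}_{G\leftarrow B_S}\Pr[\mathcal{A}^G(w_S)\text{ accepts}]\ge1-\epsilon$, and for every $\mathsf{NO}$ distribution $B_{\mathsf{NO}}$ and every $w\in\{0,1\}^q$, $\mathbb{E}_{G\leftarrow B_{\mathsf{NO}}}\Pr[\mathcal{A}^G(w)\text{ accepts}]\le\epsilon$. Then for every $\mu>0$ there exist a $(\mu,\zeta,2q/(\mu\log\ell))$-sunflower $\Sigma$ and a $k$-query quantum algorithm $\mathcal{A}'$ (taking no witness) such that $\mathbb{E}_{G\leftarrow B_S}\Pr[\mathcal{A}'^G\text{ accepts}]\ge1-\epsilon$ for every $S\in\Sigma$, and $\mathbb{E}_{G\leftarrow B_{\mathsf{NO}}}\Pr[\mathcal{A}'^G\text{ accepts}]\le\epsilon$ for every $\mathsf{NO}$ distribution $B_{\mathsf{NO}}$.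
   Context: $N=2^n$ (sufficiently large), $|V|=N$; $d=100$, $\ell=N^{1/10}$, $\gamma=N^{-1/10}$, $M=(1+\gamma)N$, $z=N^{9/10}$, $\zeta=(1+\gamma)z$, $\alpha=1/(2\cdot10^8)$; $\log$ is base $2$. Graphs are $d$-colored $d$-regular on $V$, accessed via $|j,\kappa,z\rangle\mapsto|j,\kappa,z\oplus G(j,\kappa)\rangle$ where $G(j,\kappa)$ is the $\kappa$-neighbor of $j$. A $\mathsf{NO}$ distribution is a distribution supported on $\alpha$-expanding graphs (second largest eigenvalue of the normalized adjacency matrix at most $1-\alpha$). Distribution $P_{M,\ell}$: take $V'$ of size $M$ partitioned into $\ell$ equal parts $V_1,\dots,V_\ell$; on each part take the union of $d$ independent uniformly random perfect matchings, the $\kappa$-th colored $\kappa$, giving $G'$; choose $k:V\to[\ell]$ uniformly at random and an injection $\iota:V\to V'$ with $\iota(j)$ uniformly random in $V_{k(j)}$ without replacement (outputting the edgeless graph if some part is exhausted); let $G$ contain $(j_1,j_2,\kappa)$ iff $(\iota(j_1),\iota(j_2),\kappa)\in G'$, and add a self-loop $(j,j,\kappa)$ wherever $j$ lacks a $\kappa$-colored edge. For $S\subseteq V$, $B_S$ is $P_{M,\ell}$ conditioned on $G$ having a connected component contained in $S$. A collection $\Sigma$ of $\zeta$-element subsets of $V$ is a $(\mu,\zeta,t)$-sunflower if there is $F\subseteq V$ with $|F|\le t$ (the core) such that every $S\in\Sigma$ contains $F$, and every $x\in(\bigcup_{S\in\Sigma}S)\setminus F$ satisfies $\Pr_{S\in\Sigma}[x\in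 S]\le(\zeta/N)^{1-\mu}$ ($S$ uniform in $\Sigma$). *)

theory Defs
  imports "HOL-Probability.Probability" "Jordan_Normal_Form.Char_Poly"
begin

section \<open>Parameters (N = 2^n, with 10 dividing n so that all quantities are integers)\<close>

definition dd :: nat where "dd = 100"
definition NN :: "nat \<Rightarrow> nat" where "NN n = 2 ^ n"
definition ell :: "nat \<Rightarrow> nat" where "ell n = 2 ^ (n div 10)"
definition zz :: "nat \<Rightarrow> nat" where "zz n = 2 ^ (9 * (n div 10))"
definition MM :: "nat \<Rightarrow> nat" where "MM n = NN n + zz n"   \<comment> \<open>M = (1+\<gamma>)N\<close>
definition zeta :: "nat \<Rightarrow> nat" where "zeta n = zz n + 2 ^ (8 * (n div 10))"  \<comment> \<open>\<zeta> = (1+\<gamma>)z\<close>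
definition alpha :: real where "alpha = 1 / (2 * 10^8)"

definition VV :: "nat \<Rightarrow> nat set" where "VV n = {0..<NN n}"

section \<open>Graphs: G j \<kappa> is the \<kappa>-neighbour of j\<close>

type_synonym graph = "nat \<Rightarrow> nat \<Rightarrow> nat"

definition dreg_graph :: "nat \<Rightarrow> graph \<Rightarrow> bool" where
  "dreg_graph n G \<longleftrightarrow> (\<forall>j\<in>VV n. \<forall>\<kappa><dd. G j \<kappa> \<in> VV n \<and> G (G j \<kappa>) \<kappa> = j)"

definition edge_rel :: "nat \<Rightarrow> graph \<Rightarrow> (nat \<times> nat) set" where
  "edge_rel n G = {(j, G j \<kappa>) | j \<kappa>. j \<in> VV n \<and> \<kappa> < dd}"

definition is_component :: "nat \<Rightarrow> graph \<Rightarrow> nat set \<Rightarrow> bool" where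
  "is_component n G C \<longleftrightarrow> (\<exists>v\<in>VV n. C = {u. (v, u) \<in> (edge_rel n G)\<^sup>*})"

definition norm_adj :: "nat \<Rightarrow> graph \<Rightarrow> real mat" where
  "norm_adj n G = mat (NN n) (NN n) (\<lambda>(i, j). real (card {\<kappa>\<in>{0..<dd}. G i \<kappa> = j}) / real dd)"

definition eig_mset :: "real mat \<Rightarrow> real multiset" where
  "eig_mset A = Abs_multiset (\<lambda>x. order x (char_poly A))"

definition second_eig :: "real mat \<Rightarrow> real" where
  "second_eig A = rev (sorted_list_of_multiset (eig_mset A)) ! 1"

definition expanding :: "nat \<Rightarrow> real \<Rightarrow> graph \<Rightarrow> bool" where
  "expanding n a G \<longleftrightarrow> dreg_graph n G \<and> second_eig (norm_adj n G) \<le> 1 - a"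

definition NO_dist :: "nat \<Rightarrow> graph pmf \<Rightarrow> bool" where
  "NO_dist n D \<longleftrightarrow> set_pmf D \<subseteq> {G. expanding n alpha G}"

definition part_size :: "nat \<Rightarrow> nat \<Rightarrow> nat" where "part_size M l = M div l"
definition part :: "nat \<Rightarrow> nat \<Rightarrow> nat \<Rightarrow> nat set" where
  "part M l i = {i * part_size M l ..< (i + 1) * part_size M l}"

text \<open>A perfect matching on each part is a fixed-point-free involution of that part;
  colour \<kappa>'s matchings on all parts together form one part-preserving fixed-point-free
  involution of V' = {0..<M} (identity outside V').\<close>
definition part_matchings :: "nat \<Rightarrow> nat \<Rightarrow> (nat \<Rightarrow> nat) set" where
  "part_matchings M l = {\<sigma>. (\<forall>i<l. \<forall>x\<in>part M l i. \<sigma> x \<in> part M l i \<and> \<sigma> x \<noteq> x \<and> \<sigma> (\<sigma> x) = x)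
                           \<and> (\<forall>x. x \<notin> {0..<M} \<longrightarrow> \<sigma> x = x)}"

text \<open>d independent uniform choices (one per colour); uniform on the product set.\<close>
definition colour_matchings :: "nat \<Rightarrow> nat \<Rightarrow> (nat \<Rightarrow> nat \<Rightarrow> nat) set" where
  "colour_matchings M l = {0..<dd} \<rightarrow>\<^sub>E part_matchings M l"

text \<open>injections \<iota> with \<iota>(j) in part V_{k(j)}; uniform on this set = independent uniform
  sampling without replacement within each part\<close>
definition injections :: "nat \<Rightarrow> nat \<Rightarrow> nat \<Rightarrow> (nat \<Rightarrow> nat) \<Rightarrow> (nat \<Rightarrow> nat) set" where
  "injections n M l k = {\<iota> \<in> VV n \<rightarrow>\<^sub>E {0..<M}. inj_on \<iota> (VV n) \<and> (\<forall>j\<in>VV n. \<iota> j \<in> part M l (k j))}"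

definition edgeless_graph :: "nat \<Rightarrow> graph" where
  "edgeless_graph n = (\<lambda>j \<kappa>. if j \<in> VV n \<and> \<kappa> < dd then j else 0)"

definition induced_graph :: "nat \<Rightarrow> (nat \<Rightarrow> nat \<Rightarrow> nat) \<Rightarrow> (nat \<Rightarrow> nat) \<Rightarrow> graph" where
  "induced_graph n \<sigma> \<iota> = (\<lambda>j \<kappa>. if j \<in> VV n \<and> \<kappa> < dd then
       (if \<sigma> \<kappa> (\<iota> j) \<in> \<iota> ` VV n then inv_into (VV n) \<iota> (\<sigma> \<kappa> (\<iota> j)) else j)
     else 0)"

definition P_dist :: "nat \<Rightarrow> nat \<Rightarrow> nat \<Rightarrow> graph pmf" where
  "P_dist n M l = do {
     \<sigma> \<leftarrow> pmf_of_set (colour_matchings M l);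
     k \<leftarrow> pmf_of_set (VV n \<rightarrow>\<^sub>E {0..<l});
     (if injections n M l k = {} then return_pmf (edgeless_graph n)
      else do { \<iota> \<leftarrow> pmf_of_set (injections n M l k); return_pmf (induced_graph n \<sigma> \<iota>) })
   }"

definition B_dist :: "nat \<Rightarrow> nat set \<Rightarrow> graph pmf" where
  "B_dist n S = cond_pmf (P_dist n (MM n) (ell n)) {G. \<exists>C. is_component n G C \<and> C \<subseteq> S}"

text \<open>Basis states |j,\<kappa>,z,w\<rangle>: query register (j,\<kappa>,z) and workspace w < W.\<close>
type_synonym qbasis = "nat \<times> nat \<times> nat \<times> nat"
type_synonym qstate = "qbasis \<Rightarrow> complex"
type_synonym qop = "qbasis \<Rightarrow> qbasis \<Rightarrow> complex"

definition qbasis_set :: "nat \<Rightarrow> nat \<Rightarrow> qbasis set" where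
  "qbasis_set n W = VV n \<times> {0..<dd} \<times> VV n \<times> {0..<W}"

definition unitary_on :: "qbasis set \<Rightarrow> qop \<Rightarrow> bool" where
  "unitary_on B U \<longleftrightarrow> (\<forall>x\<in>B. \<forall>y\<in>B. (\<Sum>z\<in>B. cnj (U z x) * U z y) = (if x = y then 1 else 0))"

definition apply_op :: "qbasis set \<Rightarrow> qop \<Rightarrow> qstate \<Rightarrow> qstate" where
  "apply_op B U v = (\<lambda>x. \<Sum>y\<in>B. U x y * v y)"

text \<open>query operator |j,\<kappa>,z\<rangle> \<mapsto> |j,\<kappa>,z XOR G(j,\<kappa>)\<rangle> (a permutation and involution of the basis)\<close>
definition query_op :: "graph \<Rightarrow> qstate \<Rightarrow> qstate" where
  "query_op G v = (\<lambda>(j, \<kappa>, z, w). v (j, \<kappa>, Bit_Operations.xor z (G j \<kappa>), w))"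

record qalg =
  qa_work :: nat
  qa_ops :: "qop list"
  qa_acc :: "qbasis set"

text \<open>A k-query algorithm: unitaries U_0,...,U_k, with queries in between, starting
  from |0,0,0,0\<rangle>, then a computational-basis measurement; accept iff outcome in qa_acc.\<close>
definition valid_alg :: "nat \<Rightarrow> nat \<Rightarrow> qalg \<Rightarrow> bool" where
  "valid_alg n k A \<longleftrightarrow> qa_work A \<ge> 1 \<and> length (qa_ops A) = k + 1 \<and>
     (\<forall>U\<in>set (qa_ops A). unitary_on (qbasis_set n (qa_work A)) U)"

definition init_state :: qstate where
  "init_state = (\<lambda>x. if x = (0, 0, 0, 0) then 1 else 0)"

definition final_state :: "nat \<Rightarrow> qalg \<Rightarrow> graph \<Rightarrow> qstate" where
  "final_state n A G = (let B = qbasis_set n (qa_work A) in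
     foldl (\<lambda>s U. apply_op B U (query_op G s))
           (apply_op B (hd (qa_ops A)) init_state) (tl (qa_ops A)))"

definition accept_prob :: "nat \<Rightarrow> qalg \<Rightarrow> graph \<Rightarrow> real" where
  "accept_prob n A G = (\<Sum>x\<in>qbasis_set n (qa_work A) \<inter> qa_acc A. (cmod (final_state n A G x))\<^sup>2)"

definition exp_accept :: "nat \<Rightarrow> qalg \<Rightarrow> graph pmf \<Rightarrow> real" where
  "exp_accept n A D = measure_pmf.expectation D (\<lambda>G. accept_prob n A G)"

definition sunflower :: "nat \<Rightarrow> real \<Rightarrow> nat \<Rightarrow> real \<Rightarrow> nat set set \<Rightarrow> bool" where
  "sunflower n \<mu> \<zeta> t \<Sigma> \<longleftrightarrow>
     \<Sigma> \<noteq> {} \<and> (\<forall>S\<in>\<Sigma>. S \<subseteq> VV n \<and> card S = \<zeta>) \<and>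
     (\<exists>F \<subseteq> VV n. real (card F) \<le> t \<and> (\<forall>S\<in>\<Sigma>. F \<subseteq> S) \<and>
        (\<forall>x \<in> \<Union>\<Sigma> - F. real (card {S\<in>\<Sigma>. x \<in> S}) / real (card \<Sigma>)
                          \<le> (real \<zeta> / real (NN n)) powr (1 - \<mu>)))"

end

theory Submission imports Defs begin

lemma choose_ratio:
  fixes N z f :: nat
  assumes "f \<le> z" "z \<le> N" "N > 0"
  shows "real ((N - f) choose (z - f)) \<le> (real z / real N) ^ f * real (N choose z)"
  using assms(1)
proof (induction f)
  case 0 then show ?case by simp
next
  case (Suc f)
  have fz: "f < z" using Suc.prems by simp
  define a where "a = N - f - 1"
  define b where "b = z - f - 1"
  have aS: "Suc a = N - f" using fz assms unfolding a_def by linarith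
  have bS: "Suc b = z - f" using fz unfolding b_def by linarith
  have eq: "Suc b * (Suc a choose Suc b) = Suc a * (a choose b)" by (rule Suc_times_binomial)
  have e2: "real (z - f) * real ((N - f) choose (z - f)) = real (N - f) * real ((N - Suc f) choose (z - Suc f))"
  proof -
    have "a = N - Suc f" "b = z - Suc f" unfolding a_def b_def by auto
    then show ?thesis using eq aS bS by (metis of_nat_mult)
  qed
  have Npos: "real (N - f) > 0" using fz assms by simp
  have r: "real (z - f) / real (N - f) \<le> real z / real N"
  proof -
    have "real (z - f) * real N \<le> real z * real (N - f)"
    proof -
      have "real f * real z \<le> real N * real f" using assms
        by (metis mult.commute mult_left_mono of_nat_0_le_iff of_nat_le_iff)
      then show ?thesis using fz assms by (simp add: of_nat_diff algebra_simps)
    qed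
    then show ?thesis using Npos assms by (simp add: divide_simps)
  qed
  have "real ((N - Suc f) choose (z - Suc f)) = real (z - f) / real (N - f) * real ((N - f) choose (z - f))"
    using e2 Npos by (simp add: field_simps)
  also have "\<dots> \<le> real z / real N * real ((N - f) choose (z - f))"
    by (rule mult_right_mono[OF r]) simp
  also have "\<dots> \<le> real z / real N * ((real z / real N) ^ f * real (N choose z))"
    by (rule mult_left_mono) (use Suc fz in auto)
  finally show ?case by simp
qed

lemma count_containing:
  fixes V F :: "'a set"
  assumes "finite V" "F \<subseteq> V"
  shows "card {S. S \<subseteq> V \<and> card S = z \<and> F \<subseteq> S} \<le> (card V - card F) choose (z - card F)"
proof -
  have fF: "finite F" using assms finite_subset by blast
  have "card {S. S \<subseteq> V \<and> card S = z \<and> F \<subseteq> S} \<le> card {T. T \<subseteq> V - F \<and> card T = z - card F}"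
  proof (rule card_inj_on_le[where f = "\<lambda>S. S - F"])
    show "inj_on (\<lambda>S. S - F) {S. S \<subseteq> V \<and> card S = z \<and> F \<subseteq> S}"
      by (rule inj_onI) blast
    show "(\<lambda>S. S - F) ` {S. S \<subseteq> V \<and> card S = z \<and> F \<subseteq> S} \<subseteq> {T. T \<subseteq> V - F \<and> card T = z - card F}"
      using fF by (auto simp: card_Diff_subset)
    show "finite {T. T \<subseteq> V - F \<and> card T = z - card F}" using assms by simp
  qed
  also have "\<dots> = card (V - F) choose (z - card F)" by (rule n_subsets) (use assms in simp)
  also have "card (V - F) = card V - card F" using assms fF by (simp add: card_Diff_subset)
  finally show ?thesis .
qed

lemma pigeon:
  fixes Z :: "'a set" and W :: "'a \<Rightarrow> 'b" and Ws :: "'b set"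
  assumes "finite Z" "finite Ws" "Ws \<noteq> {}" "\<forall>S\<in>Z. W S \<in> Ws"
  shows "\<exists>w\<in>Ws. card Z \<le> card Ws * card {S\<in>Z. W S = w}"
proof -
  define g where "g w = card {S\<in>Z. W S = w}" for w
  obtain w where w: "w \<in> Ws" "\<forall>w'\<in>Ws. g w' \<le> g w"
  proof -
    have "Max (g ` Ws) \<in> g ` Ws" using assms by simp
    then obtain w where "w \<in> Ws" "g w = Max (g ` Ws)" by auto
    moreover have "\<forall>w'\<in>Ws. g w' \<le> Max (g ` Ws)" using assms by simp
    ultimately show ?thesis using that by metis
  qed
  have "Z = (\<Union>w\<in>Ws. {S\<in>Z. W S = w})" using assms by auto
  then have "card Z \<le> (\<Sum>w\<in>Ws. g w)" unfolding g_def using card_UN_le[OF assms(2)] by metis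
  also have "\<dots> \<le> (\<Sum>w'\<in>Ws. g w)" by (rule sum_mono) (use w in auto)
  also have "\<dots> = card Ws * g w" by simp
  finally show ?thesis using w unfolding g_def by blast
qed

lemma core:
  fixes V :: "'a set" and \<Sigma>0 :: "'a set set" and \<rho> :: real
  assumes "finite V" "\<Sigma>0 \<subseteq> Pow V" "\<Sigma>0 \<noteq> {}" "\<rho> > 0"
  shows "\<exists>F\<subseteq>V. {S\<in>\<Sigma>0. F \<subseteq> S} \<noteq> {} \<and>
     real (card \<Sigma>0) \<le> real (card {S\<in>\<Sigma>0. F \<subseteq> S}) / \<rho> ^ card F \<and>
     (\<forall>x\<in>\<Union>{S\<in>\<Sigma>0. F \<subseteq> S} - F. real (card {S\<in>{S\<in>\<Sigma>0. F \<subseteq> S}. x \<in> S}) \<le> \<rho> * real (card {S\<in>\<Sigma>0. F \<subseteq> S}))"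
proof -
  define \<phi> where "\<phi> F = real (card {S\<in>\<Sigma>0. F \<subseteq> S}) / \<rho> ^ card F" for F
  have fin0: "finite \<Sigma>0" using assms by (meson finite_Pow_iff rev_finite_subset)
  obtain F where F: "F \<subseteq> V" "\<forall>F'\<in>Pow V. \<phi> F' \<le> \<phi> F"
  proof -
    have "Max (\<phi> ` Pow V) \<in> \<phi> ` Pow V" using assms by (intro Max_in) auto
    then obtain F where "F \<in> Pow V" "\<phi> F = Max (\<phi> ` Pow V)" by auto
    moreover have "\<forall>w'\<in>Pow V. \<phi> w' \<le> Max (\<phi> ` Pow V)" using assms by simp
    ultimately show ?thesis using that by auto
  qed
  have e0: "\<phi> {} = real (card \<Sigma>0)" unfolding \<phi>_def by simp
  have ge: "real (card \<Sigma>0) \<le> \<phi> F" using F(2) e0 by (metis Pow_iff empty_subsetI)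
  have ne: "{S\<in>\<Sigma>0. F \<subseteq> S} \<noteq> {}"
  proof
    assume "{S\<in>\<Sigma>0. F \<subseteq> S} = {}"
    then have "\<phi> F = 0" unfolding \<phi>_def by (metis card.empty div_0 of_nat_0)
    moreover have "card \<Sigma>0 > 0" using fin0 assms by (simp add: card_gt_0_iff)
    ultimately show False using ge by simp
  qed
  have fF: "finite F" using F assms finite_subset by blast
  have sf: "\<forall>x\<in>\<Union>{S\<in>\<Sigma>0. F \<subseteq> S} - F. real (card {S\<in>{S\<in>\<Sigma>0. F \<subseteq> S}. x \<in> S}) \<le> \<rho> * real (card {S\<in>\<Sigma>0. F \<subseteq> S})"
  proof
    fix x assume x: "x \<in> \<Union>{S\<in>\<Sigma>0. F \<subseteq> S} - F"
    then have xV: "x \<in> V" using assms by auto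
    have c: "card (insert x F) = Suc (card F)" using x fF by simp
    have st: "{S\<in>{S\<in>\<Sigma>0. F \<subseteq> S}. x \<in> S} = {S\<in>\<Sigma>0. insert x F \<subseteq> S}" by auto
    have "\<phi> (insert x F) \<le> \<phi> F" using F xV by auto
    then have "real (card {S\<in>\<Sigma>0. insert x F \<subseteq> S}) / (\<rho> * \<rho> ^ card F) \<le> real (card {S\<in>\<Sigma>0. F \<subseteq> S}) / \<rho> ^ card F"
      unfolding \<phi>_def c by simp
    then have "real (card {S\<in>\<Sigma>0. insert x F \<subseteq> S}) / \<rho> \<le> real (card {S\<in>\<Sigma>0. F \<subseteq> S})"
      using assms by (simp add: divide_simps split: if_splits)
    then show "real (card {S\<in>{S\<in>\<Sigma>0. F \<subseteq> S}. x \<in> S}) \<le> \<rho> * real (card {S\<in>\<Sigma>0. F \<subseteq> S})"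
      unfolding st using assms by (simp add: divide_simps mult.commute)
  qed
  show ?thesis using F(1) ne ge sf unfolding \<phi>_def by blast
qed


lemma params:
  assumes "n \<ge> 20" "10 dvd n"
  shows "zeta n \<le> NN n" "zeta n > 0" "real (ell n) \<ge> 2"
        "real (ell n) * (real (zeta n))^2 \<le> (real (NN n))^2"
proof -
  obtain m where n: "n = 10 * m" using assms by auto
  have m2: "m \<ge> 2" using assms n by simp
  have dm: "n div 10 = m" using n by simp
  have a: "(2::nat)^(8*m) \<le> 2^(9*m)" by (rule power_increasing) auto
  have zb: "zeta n \<le> 2 * 2^(9*m)" unfolding zeta_def zz_def dm using a by simp
  have "(2::nat) * 2^(9*m) = 2^(9*m+1)" by simp
  also have "\<dots> \<le> 2^(10*m)" by (rule power_increasing) (use m2 in auto)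
  finally show "zeta n \<le> NN n" using zb unfolding NN_def n by simp
  show "zeta n > 0" unfolding zeta_def by simp
  have "(2::nat)^1 \<le> 2^m" by (rule power_increasing) (use m2 in auto)
  then have "(2::nat) \<le> 2^m" by simp
  then show "real (ell n) \<ge> 2" unfolding ell_def dm by (metis of_nat_le_iff of_nat_numeral)
  have ex: "m + (9*m+1)*2 = 19*m+2" by simp
  have zb2: "(zeta n)^2 \<le> (2 * 2^(9*m))^2" by (rule power_mono[OF zb]) simp
  have e1: "(2::nat) * 2^(9*m) = 2^(9*m+1)" by simp
  have e2: "((2::nat) * 2^(9*m))^2 = 2^((9*m+1)*2)" unfolding e1 by (simp only: power_mult)
  have "ell n * (zeta n)^2 \<le> 2^m * (2 * 2^(9*m))^2" unfolding ell_def dm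
    using zb2 by (rule mult_left_mono) simp
  also have "\<dots> = 2^(m + (9*m+1)*2)" unfolding e2 by (simp only: power_add)
  also have "(2::nat)^(m + (9*m+1)*2) = 2^(19*m+2)" by (simp only: ex)
  also have "\<dots> \<le> 2^(20*m)" by (rule power_increasing) (use m2 in auto)
  also have "\<dots> = (NN n)^2" unfolding NN_def n by (simp add: power_mult[symmetric] mult.commute)
  finally have "ell n * (zeta n)^2 \<le> (NN n)^2" .
  then show "real (ell n) * (real (zeta n))^2 \<le> (real (NN n))^2"
    by (metis of_nat_le_iff of_nat_mult of_nat_power)
qed

theorem lemma18:
  "\<exists>n0. \<forall>n \<ge> n0. 10 dvd n \<longrightarrow>
    (\<forall>(\<epsilon>::real) (q::nat) (k::nat) (A :: bool list \<Rightarrow> qalg).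
      \<epsilon> > 0 \<longrightarrow>
      (\<forall>w. length w = q \<longrightarrow> valid_alg n k (A w)) \<longrightarrow>
      (\<forall>S. S \<subseteq> VV n \<and> card S = zeta n \<longrightarrow>
         (\<exists>w. length w = q \<and> exp_accept n (A w) (B_dist n S) \<ge> 1 - \<epsilon>)) \<longrightarrow>
      (\<forall>D w. NO_dist n D \<and> length w = q \<longrightarrow> exp_accept n (A w) D \<le> \<epsilon>) \<longrightarrow>
      (\<forall>\<mu>::real. \<mu> > 0 \<longrightarrow>
         (\<exists>\<Sigma> A'. sunflower n \<mu> (zeta n) (2 * real q / (\<mu> * log 2 (real (ell n)))) \<Sigma> \<and>
                  valid_alg n k A' \<and>
                  (\<forall>S\<in>\<Sigma>. exp_accept n A' (B_dist n S) \<ge> 1 - \<epsilon>) \<and>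
                  (\<forall>D. NO_dist n D \<longrightarrow> exp_accept n A' D \<le> \<epsilon>))))"
proof (rule exI[of _ 20], intro allI impI)
  fix n :: nat and \<epsilon> :: real and q k :: nat and A :: "bool list \<Rightarrow> qalg" and \<mu> :: real
  assume n20: "20 \<le> n" and dv: "10 dvd n" and "\<epsilon> > 0"
    and hA: "\<forall>w. length w = q \<longrightarrow> valid_alg n k (A w)"
    and hY: "\<forall>S. S \<subseteq> VV n \<and> card S = zeta n \<longrightarrow>
         (\<exists>w. length w = q \<and> exp_accept n (A w) (B_dist n S) \<ge> 1 - \<epsilon>)"
    and hN: "\<forall>D w. NO_dist n D \<and> length w = q \<longrightarrow> exp_accept n (A w) D \<le> \<epsilon>"
    and mu: "\<mu> > 0"
  note P = params[OF n20 dv]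
  define N where "N = NN n"
  define z where "z = zeta n"
  have zN: "z \<le> N" "z > 0" using P unfolding N_def z_def by auto
  have Npos: "N > 0" using zN by simp
  have finV: "finite (VV n)" unfolding VV_def by simp
  have cV: "card (VV n) = N" unfolding VV_def N_def by simp
  define Z where "Z = {S. S \<subseteq> VV n \<and> card S = z}"
  define Ws where "Ws = {w::bool list. length w = q}"
  define W where "W S = (SOME w. length w = q \<and> exp_accept n (A w) (B_dist n S) \<ge> 1 - \<epsilon>)" for S
  have WS: "length (W S) = q \<and> exp_accept n (A (W S)) (B_dist n S) \<ge> 1 - \<epsilon>" if "S \<in> Z" for S
    unfolding W_def by (rule someI_ex) (use hY that in \<open>auto simp: Z_def z_def\<close>)
  have cWs: "card Ws = 2^q"
  proof -
    have "Ws = {xs. set xs \<subseteq> (UNIV::bool set) \<and> length xs = q}" unfolding Ws_def by simp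
    then show ?thesis using card_lists_length_eq[of "UNIV::bool set" q] by simp
  qed
  have finWs: "finite Ws"
  proof -
    have "Ws = {xs. set xs \<subseteq> (UNIV::bool set) \<and> length xs = q}" unfolding Ws_def by simp
    then show ?thesis using finite_lists_length_eq[of "UNIV::bool set" q] by simp
  qed
  have Wsne: "Ws \<noteq> {}" using cWs by auto
  have finZ: "finite Z" unfolding Z_def using finV by simp
  have cZ: "card Z = N choose z" unfolding Z_def using n_subsets[OF finV, of z] cV by simp
  have cZpos: "card Z > 0" using cZ zN by simp
  obtain w0 where w0: "w0 \<in> Ws" "card Z \<le> card Ws * card {S\<in>Z. W S = w0}"
    using pigeon[OF finZ finWs Wsne, of W] WS unfolding Ws_def by auto
  define \<Sigma>0 where "\<Sigma>0 = {S\<in>Z. W S = w0}"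
  have \<Sigma>0ne: "\<Sigma>0 \<noteq> {}" using w0 cZpos unfolding \<Sigma>0_def by (metis card.empty mult_0_right not_le)
  have \<Sigma>0P: "\<Sigma>0 \<subseteq> Pow (VV n)" unfolding \<Sigma>0_def Z_def by auto
  define x where "x = real z / real N"
  have xpos: "x > 0" unfolding x_def using zN by simp
  define \<rho> where "\<rho> = x powr (1 - \<mu>)"
  have \<rho>pos: "\<rho> > 0" unfolding \<rho>_def using xpos by simp
  obtain F where F: "F \<subseteq> VV n" "{S\<in>\<Sigma>0. F \<subseteq> S} \<noteq> {}"
     "real (card \<Sigma>0) \<le> real (card {S\<in>\<Sigma>0. F \<subseteq> S}) / \<rho> ^ card F"
     "\<forall>y\<in>\<Union>{S\<in>\<Sigma>0. F \<subseteq> S} - F. real (card {S\<in>{S\<in>\<Sigma>0. F \<subseteq> S}. y \<in> S}) \<le> \<rho> * real (card {S\<in>\<Sigma>0. F \<subseteq> S})"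
    using core[OF finV \<Sigma>0P \<Sigma>0ne \<rho>pos] by blast
  define \<Sigma> where "\<Sigma> = {S\<in>\<Sigma>0. F \<subseteq> S}"
  define f where "f = card F"
  have \<Sigma>Z: "\<Sigma> \<subseteq> Z" unfolding \<Sigma>_def \<Sigma>0_def by auto
  have finS: "finite \<Sigma>" using \<Sigma>Z finZ finite_subset by blast
  have cSpos: "card \<Sigma> > 0" using F(2) finS unfolding \<Sigma>_def by (simp add: card_gt_0_iff)
  have fz: "f \<le> z"
  proof -
    obtain S where "S \<in> \<Sigma>" using F(2) unfolding \<Sigma>_def by blast
    then have "F \<subseteq> S" "card S = z" "finite S" using \<Sigma>Z finV unfolding \<Sigma>_def Z_def
      by (auto intro: finite_subset)
    then show ?thesis unfolding f_def by (metis card_mono)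
  qed
  have c1: "card \<Sigma> \<le> (N - f) choose (z - f)"
  proof -
    have "\<Sigma> \<subseteq> {S. S \<subseteq> VV n \<and> card S = z \<and> F \<subseteq> S}" using \<Sigma>Z unfolding \<Sigma>_def Z_def by auto
    then have "card \<Sigma> \<le> card {S. S \<subseteq> VV n \<and> card S = z \<and> F \<subseteq> S}"
      by (rule card_mono[rotated]) (use finV in simp)
    also have "\<dots> \<le> (N - f) choose (z - f)" using count_containing[OF finV F(1), of z] cV f_def by simp
    finally show ?thesis .
  qed
  have c2: "real (card \<Sigma>) \<le> x ^ f * real (N choose z)"
    using c1 choose_ratio[OF fz zN(1) Npos] unfolding x_def by (meson of_nat_le_iff order_trans)
  have nb: "N choose z \<le> 2^q * card \<Sigma>0"
    using w0(2) cWs cZ unfolding \<Sigma>0_def by simp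
  have "real (N choose z) \<le> real (2^q * card \<Sigma>0)" using nb by (simp only: of_nat_le_iff)
  also have "\<dots> = 2^q * real (card \<Sigma>0)" by simp
  also have "\<dots> \<le> 2^q * (real (card \<Sigma>) / \<rho> ^ f)"
    using F(3) unfolding \<Sigma>_def f_def by (intro mult_left_mono) auto
  also have "\<dots> \<le> 2^q * (x ^ f * real (N choose z) / \<rho> ^ f)"
    using c2 \<rho>pos by (simp add: divide_right_mono)
  finally have "real (N choose z) * 1 \<le> real (N choose z) * (2^q * (x / \<rho>) ^ f)"
    by (simp add: power_divide algebra_simps)
  then have one: "1 \<le> 2^q * (x / \<rho>) ^ f" using cZpos cZ by simp
  have xr: "x / \<rho> = x powr \<mu>" unfolding \<rho>_def using xpos
  proof -
    have "x powr 1 / x powr (1 - \<mu>) = x powr (1 - (1 - \<mu>))" by (rule powr_diff[symmetric])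
    then show "x / x powr (1 - \<mu>) = x powr \<mu>" using xpos by simp
  qed
  have "0 \<le> log 2 (2^q * (x powr \<mu>) ^ f)" using one xr by simp
  also have "\<dots> = real q + real f * (\<mu> * log 2 x)"
    using xpos by (simp add: log_mult log_nat_power log_powr)
  finally have L: "0 \<le> real q + real f * (\<mu> * log 2 x)" .
  have lx: "log 2 x = log 2 (real z) - log 2 (real N)" unfolding x_def using zN by (simp add: log_divide)
  have ll: "log 2 (real (ell n)) + 2 * log 2 (real z) \<le> 2 * log 2 (real N)"
  proof -
    have "log 2 (real (ell n) * (real z)^2) \<le> log 2 ((real N)^2)"
      using P(4) P(3) zN unfolding z_def N_def by (subst log_le_cancel_iff) auto
    then show ?thesis using P(3) zN by (simp add: log_mult log_nat_power)
  qed
  have lpos: "log 2 (real (ell n)) > 0" using P(3) by simp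
  have "real f * \<mu> * log 2 (real (ell n)) \<le> 2 * real q"
  proof -
    have "real f * \<mu> * log 2 (real (ell n)) \<le> real f * \<mu> * (-2 * log 2 x)"
      using ll lx mu by (intro mult_left_mono) auto
    then show ?thesis using L by (simp add: algebra_simps)
  qed
  then have fb: "real (card F) \<le> 2 * real q / (\<mu> * log 2 (real (ell n)))"
    using mu lpos unfolding f_def by (simp add: pos_le_divide_eq mult.commute mult.left_commute)
  have s1: "\<Sigma> \<noteq> {}" using F(2) unfolding \<Sigma>_def .
  have s2: "\<forall>S\<in>\<Sigma>. S \<subseteq> VV n \<and> card S = zeta n" using \<Sigma>Z unfolding Z_def z_def by auto
  have s4: "\<forall>S\<in>\<Sigma>. F \<subseteq> S" unfolding \<Sigma>_def by auto
  have s3: "\<forall>y\<in>\<Union> \<Sigma> - F. real (card {S \<in> \<Sigma>. y \<in> S}) / real (card \<Sigma>) \<le> (real (zeta n) / real (NN n)) powr (1 - \<mu>)"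
  proof
    fix y assume that: "y \<in> \<Union> \<Sigma> - F"
      have "real (card {S \<in> \<Sigma>. y \<in> S}) \<le> \<rho> * real (card \<Sigma>)" using F(4) that unfolding \<Sigma>_def by blast
      then show "real (card {S \<in> \<Sigma>. y \<in> S}) / real (card \<Sigma>) \<le> (real (zeta n) / real (NN n)) powr (1 - \<mu>)"
        using cSpos unfolding \<rho>_def x_def z_def N_def by (simp add: divide_simps)
  qed
  have sun: "sunflower n \<mu> (zeta n) (2 * real q / (\<mu> * log 2 (real (ell n)))) \<Sigma>"
    unfolding sunflower_def using s1 s2 s3 s4 F(1) fb by blast
  show "\<exists>\<Sigma> A'. sunflower n \<mu> (zeta n) (2 * real q / (\<mu> * log 2 (real (ell n)))) \<Sigma> \<and>
                  valid_alg n k A' \<and>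
                  (\<forall>S\<in>\<Sigma>. exp_accept n A' (B_dist n S) \<ge> 1 - \<epsilon>) \<and>
                  (\<forall>D. NO_dist n D \<longrightarrow> exp_accept n A' D \<le> \<epsilon>)"
  proof (rule exI[of _ \<Sigma>], rule exI[of _ "A w0"], intro conjI ballI allI impI)
    show "sunflower n \<mu> (zeta n) (2 * real q / (\<mu> * log 2 (real (ell n)))) \<Sigma>" by (rule sun)
    show "valid_alg n k (A w0)" using hA w0 unfolding Ws_def by auto
    show "exp_accept n (A w0) (B_dist n S) \<ge> 1 - \<epsilon>" if "S \<in> \<Sigma>" for S
    proof -
      have "S \<in> Z" "W S = w0" using that \<Sigma>Z unfolding \<Sigma>_def \<Sigma>0_def by auto
      then show ?thesis using WS by metis
    qed
    show "exp_accept n (A w0) D \<le> \<epsilon>" if "NO_dist n D" for D using hN that w0 unfolding Ws_def by auto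
  qed
qed

end
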